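(* Let $\mathbf{p}_1,\mathbf{p}_2,\mathbf{p}_3\in\mathbb{R}^n$, and set $a=\|\mathbf{p}_1-\mathbf{p}_2\|$, $b=\|\mathbf{p}_2-\mathbf{p}_3\|$, $c=\|\mathbf{p}_1-\mathbf{p}_3\|$. Then the degree of monotonicity of the sequence $\mathbf{p}_1,\mathbf{p}_2,\mathbf{p}_3$ equals \[ R=\begin{cases}\tfrac12 c & \text{if } a^2+b^2>c^2,\\ R^{\mathrm{outcircle}} & \text{otherwise,}\end{cases} \] where $R^{\mathrm{outcircle}}$ is the radius of the circle passing through $\mathbf{p}_1,\mathbf{p}_2,\mathbf{p}_3$.
   Context: A closed ball in $\mathbb{R}^n$ is a set $\{x:\|x-q\|\le\rho\}$ with radius $\rho$. The degree of monotonicity of a finite sequence (vector-valued signal) $\mathbf{p}_1,\mathbf{p}_2,\mathbf{p}_3$ is the largest value $R$ such that, for every closed ball $B$ of radius at most $R$, the set of indices $\{i\in\{1,2,3\}:\mathbf{p}_i\in B\}$ is a set of consecutive integers. The circumradius $R^{\mathrm{outcircle}}$ of the three points is given (whenever $a,b,c>0$) by Heron's formula $R^{\mathrm{outcircle}}=\frac{abc}{4\sqrt{\sigma(\sigma-a)(\sigma-b)(\sigma-c)}}$ with $\sigma=(a+b+c)/2$. *)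

theory Defs
  imports "HOL-Analysis.Analysis" "HOL-Library.Extended_Real"
begin

definition consecutive_set :: "nat set \<Rightarrow> bool" where
  "consecutive_set S \<longleftrightarrow> (\<forall>i j k. i \<le> j \<and> j \<le> k \<and> i \<in> S \<and> k \<in> S \<longrightarrow> j \<in> S)"

definition indices_in :: "'a list \<Rightarrow> 'a set \<Rightarrow> nat set" where
  "indices_in ps B = {i. 1 \<le> i \<and> i \<le> length ps \<and> ps ! (i - 1) \<in> B}"

text \<open>Taken in the
  extended reals, so that it is \<infinity> when every radius works.\<close>
definition degree_of_monotonicity :: "('a::metric_space) list \<Rightarrow> ereal" where
  "degree_of_monotonicity ps =
     Sup {ereal R | R. \<forall>q \<rho>. 0 \<le> \<rho> \<and> \<rho> \<le> R \<longrightarrow> consecutive_set (indices_in ps (cball q \<rho>))}"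

text \<open>Circumradius via Heron's formula; \<infinity> for degenerate (collinear) triples, where no
  circle passes through the three points.\<close>
definition circumradius :: "'a::real_normed_vector \<Rightarrow> 'a \<Rightarrow> 'a \<Rightarrow> ereal" where
  "circumradius p1 p2 p3 =
     (let a = norm (p1 - p2); b = norm (p2 - p3); c = norm (p1 - p3);
          \<sigma> = (a + b + c) / 2;
          H = \<sigma> * (\<sigma> - a) * (\<sigma> - b) * (\<sigma> - c)
      in if H = 0 then \<infinity> else ereal (a * b * c / (4 * sqrt H)))"

end

theory Submission
  imports Defs
begin

lemma consec3: "consecutive_set (indices_in [p1,p2,p3] S) \<longleftrightarrow> \<not>(p1\<in>S \<and> p3\<in>S \<and> p2\<notin>S)"
proof
  assume h: "consecutive_set (indices_in [p1,p2,p3] S)"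
  show "\<not>(p1\<in>S \<and> p3\<in>S \<and> p2\<notin>S)"
  proof
    assume "p1\<in>S \<and> p3\<in>S \<and> p2\<notin>S"
    hence "1 \<in> indices_in [p1,p2,p3] S" "3 \<in> indices_in [p1,p2,p3] S" "2 \<notin> indices_in [p1,p2,p3] S"
      by (auto simp: indices_in_def)
    with h show False unfolding consecutive_set_def by (metis one_le_numeral numeral_le_iff semiring_norm(69) semiring_norm(72) le_num_One_iff)
  qed
next
  assume h: "\<not>(p1\<in>S \<and> p3\<in>S \<and> p2\<notin>S)"
  show "consecutive_set (indices_in [p1,p2,p3] S)"
    unfolding consecutive_set_def
  proof (intro allI impI)
    fix i j k :: nat assume a: "i \<le> j \<and> j \<le> k \<and> i \<in> indices_in [p1,p2,p3] S \<and> k \<in> indices_in [p1,p2,p3] S"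
    hence r: "1 \<le> i" "k \<le> 3" by (auto simp: indices_in_def)
    have "i = 1 \<or> i = 2 \<or> i = 3" "k = 1 \<or> k = 2 \<or> k = 3" "j = 1 \<or> j = 2 \<or> j = 3" using a r by auto
    then show "j \<in> indices_in [p1,p2,p3] S" using a h by (auto simp: indices_in_def)
  qed
qed

lemma sup_fin:
  assumes "\<And>R. P R \<Longrightarrow> R \<le> T" "\<And>R. R < T \<Longrightarrow> P R"
  shows "Sup {ereal R | R. P R} = ereal T"
proof (rule antisym)
  show "Sup {ereal R | R. P R} \<le> ereal T" by (rule Sup_least) (auto intro: assms(1))
  show "ereal T \<le> Sup {ereal R | R. P R}"
  proof (rule dense_le)
    fix y assume y: "y < ereal T"
    show "y \<le> Sup {ereal R | R. P R}"
    proof (cases y)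
      case (real r)
      with y have "P r" using assms(2) by auto
      then show ?thesis using real by (auto intro: Sup_upper)
    qed (use y in auto)
  qed
qed

lemma sup_inf:
  assumes "\<And>R. P R"
  shows "Sup {ereal R | R. P R} = \<infinity>"
proof -
  have "\<And>B. ereal B \<le> Sup {ereal R | R. P R}" using assms by (auto intro: Sup_upper)
  then show ?thesis by (rule ereal_top)
qed


lemma lowbound:
  fixes u v x :: "'a::real_inner"
  defines "A \<equiv> u \<bullet> u" and "B \<equiv> v \<bullet> v" and "C \<equiv> u \<bullet> v"
  defines "G \<equiv> A * B - C\<^sup>2"
  assumes C: "C \<le> 0" and G: "G > 0"
    and h1: "norm (x - u) \<le> \<rho>" and h2: "norm (x - v) \<le> \<rho>" and h3: "norm x > \<rho>" and r: "0 \<le> \<rho>"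
  shows "A * B * (A + B - 2*C) / (4*G) \<le> \<rho>\<^sup>2"
proof -
  define N P Q where "N = x \<bullet> x" "P = x \<bullet> u" "Q = x \<bullet> v"
  have e1: "N - 2*P + A \<le> \<rho>\<^sup>2"
  proof -
    have "(norm (x-u))\<^sup>2 \<le> \<rho>\<^sup>2" using h1 by (simp add: power_mono)
    thus ?thesis by (simp add: power2_norm_eq_inner inner_diff_left inner_diff_right N_P_Q_def A_def inner_commute)
  qed
  have e2: "N - 2*Q + B \<le> \<rho>\<^sup>2"
  proof -
    have "(norm (x-v))\<^sup>2 \<le> \<rho>\<^sup>2" using h2 by (simp add: power_mono)
    thus ?thesis by (simp add: power2_norm_eq_inner inner_diff_left inner_diff_right N_P_Q_def B_def inner_commute)
  qed
  have e3: "\<rho>\<^sup>2 < N"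
  proof -
    have "\<rho>\<^sup>2 < (norm x)\<^sup>2" using h3 r by (simp add: power_strict_mono)
    thus ?thesis by (simp add: power2_norm_eq_inner N_P_Q_def)
  qed
  define al be where "al = B*(A-C)" "be = A*(B-C)"
  have A0: "A \<ge> 0" "B \<ge> 0" by (auto simp: A_def B_def)
  have al0: "al \<ge> 0" "be \<ge> 0" using A0 C by (auto simp: al_be_def)
  have k0: "al + be - 2*G \<ge> 0"
  proof -
    have "al + be - 2*G = - C * (A + B - 2*C)" by (simp add: al_be_def G_def power2_eq_square algebra_simps)
    moreover have "A + B - 2*C \<ge> 0"
    proof -
      have "(u - v) \<bullet> (u - v) \<ge> 0" by simp
      thus ?thesis by (simp add: A_def B_def C_def inner_diff_left inner_diff_right inner_commute)
    qed
    ultimately show ?thesis using C by (simp add: mult_nonpos_nonneg)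
  qed
  have h4: "0 \<le> ((2*G) *\<^sub>R x - (al *\<^sub>R u + be *\<^sub>R v)) \<bullet> ((2*G) *\<^sub>R x - (al *\<^sub>R u + be *\<^sub>R v))" by simp
  hence h4': "0 \<le> 4*G*G*N - 4*G*(al*P + be*Q) + (al*al*A + 2*al*be*C + be*be*B)"
    by (simp add: inner_diff_left inner_diff_right inner_add_left inner_add_right N_P_Q_def A_def B_def C_def inner_commute algebra_simps)
  have s1: "0 \<le> al*(\<rho>\<^sup>2 - (N - 2*P + A))" using al0 e1 by simp
  have s2: "0 \<le> be*(\<rho>\<^sup>2 - (N - 2*Q + B))" using al0 e2 by simp
  have s3: "0 \<le> (al + be - 2*G)*(N - \<rho>\<^sup>2)" using k0 e3 by simp
  have S: "0 \<le> 2*G*(al*(\<rho>\<^sup>2 - (N - 2*P + A)) + be*(\<rho>\<^sup>2 - (N - 2*Q + B)) + (al + be - 2*G)*(N - \<rho>\<^sup>2))"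
    using s1 s2 s3 G by simp
  have iden: "al*al*A + 2*al*be*C + be*be*B = G*(al*A + be*B)"
    unfolding al_be_def G_def power2_eq_square by algebra
  have "4*G*G*\<rho>\<^sup>2 - 2*G*(al*A+be*B) + (al*al*A + 2*al*be*C + be*be*B) = 2*G*(al*(\<rho>\<^sup>2 - (N - 2*P + A)) + be*(\<rho>\<^sup>2 - (N - 2*Q + B)) + (al + be - 2*G)*(N - \<rho>\<^sup>2))
      + (4*G*G*N - 4*G*(al*P + be*Q) + (al*al*A + 2*al*be*C + be*be*B))"
    unfolding power2_eq_square by algebra
  hence "G*(al*A+be*B) \<le> 4*G*G*\<rho>\<^sup>2" using S h4' iden by linarith
  hence "al*A+be*B \<le> 4*G*\<rho>\<^sup>2" using G by (simp add: mult.assoc)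
  moreover have "al*A+be*B = A*B*(A+B-2*C)" by (simp add: al_be_def algebra_simps)
  ultimately show ?thesis using G by (simp add: divide_le_eq mult.commute)
qed

lemma exbad:
  fixes u v :: "'a::real_inner"
  defines "A \<equiv> u \<bullet> u" and "B \<equiv> v \<bullet> v" and "C \<equiv> u \<bullet> v"
  defines "G \<equiv> A * B - C\<^sup>2"
  assumes C: "C \<le> 0" and G: "G > 0"
    and R: "A * B * (A + B - 2*C) / (4*G) < R\<^sup>2" and R0: "R > 0"
  shows "\<exists>x \<rho>. 0 \<le> \<rho> \<and> \<rho> \<le> R \<and> norm (x - u) \<le> \<rho> \<and> norm (x - v) \<le> \<rho> \<and> norm x > \<rho>"
proof -
  define K where "K = A * B * (A + B - 2*C) / (4*G)"
  define al be where "al = B*(A-C)" "be = A*(B-C)"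
  define oc where "oc = (1/(2*G)) *\<^sub>R (al *\<^sub>R u + be *\<^sub>R v)"
  have A0: "A \<ge> 0" "B \<ge> 0" by (auto simp: A_def B_def)
  have AB: "A > 0" "B > 0"
  proof -
    have "C\<^sup>2 \<ge> 0" by simp
    hence "A * B > 0" using G unfolding G_def by linarith
    thus "A > 0" "B > 0" using A0 by (auto simp: zero_less_mult_iff)
  qed
  have ou: "oc \<bullet> u = A/2"
  proof -
    have "oc \<bullet> u = (al*A + be*C)/(2*G)" by (simp add: oc_def inner_add_left inner_add_right A_def C_def inner_commute)
    also have "al*A + be*C = A*G" unfolding al_be_def G_def power2_eq_square by algebra
    finally show ?thesis using G by simp
  qed
  have ov: "oc \<bullet> v = B/2"
  proof -
    have "oc \<bullet> v = (al*C + be*B)/(2*G)" by (simp add: oc_def inner_add_left inner_add_right B_def C_def inner_commute)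
    also have "al*C + be*B = B*G" unfolding al_be_def G_def power2_eq_square by algebra
    finally show ?thesis using G by simp
  qed
  have oo: "oc \<bullet> oc = K"
  proof -
    have "oc \<bullet> oc = oc \<bullet> ((1/(2*G)) *\<^sub>R (al *\<^sub>R u + be *\<^sub>R v))"
      by (subst (2) oc_def) (rule refl)
    also have "\<dots> = (1/(2*G)) * (al * (oc \<bullet> u) + be * (oc \<bullet> v))"
      by (simp add: inner_add_right)
    also have "\<dots> = (al*A + be*B)/(4*G)" unfolding ou ov by (simp add: field_simps)
    also have "al*A+be*B = A*B*(A+B-2*C)" by (simp add: al_be_def algebra_simps)
    finally show ?thesis by (simp add: K_def)
  qed
  have K0: "K > 0"
  proof -
    have "A + B - 2*C > 0" using AB C by simp
    thus ?thesis using AB G by (simp add: K_def)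
  qed
  have RK: "sqrt K < R" using R R0 K0 unfolding K_def[symmetric]
    by (metis real_less_lsqrt less_imp_le)
  define s where "s = R / sqrt K"
  have s1: "s > 1" using RK K0 by (simp add: s_def)
  define x where "x = s *\<^sub>R oc"
  have nx: "(norm x)\<^sup>2 = R\<^sup>2"
  proof -
    have "(norm x)\<^sup>2 = s * s * (oc \<bullet> oc)" by (simp only: power2_norm_eq_inner x_def inner_scaleR_left inner_scaleR_right mult.assoc)
    also have "\<dots> = R\<^sup>2" using K0 by (simp add: oo s_def power2_eq_square)
    finally show ?thesis .
  qed
  have nxpos: "norm x = R" using nx R0 by (metis norm_ge_zero power2_eq_imp_eq less_imp_le)
  have d1: "(norm (x - u))\<^sup>2 < R\<^sup>2"
  proof -
    have xw: "x \<bullet> u = s * A / 2" by (simp add: x_def ou)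
    have "(norm (x - u))\<^sup>2 = x \<bullet> x - 2 * (x \<bullet> u) + A"
      by (simp add: power2_norm_eq_inner inner_diff_left inner_diff_right A_def inner_commute)
    also have "x \<bullet> x = (norm x)\<^sup>2" by (simp add: power2_norm_eq_inner)
    finally have "(norm (x - u))\<^sup>2 = (norm x)\<^sup>2 - s * A + A" using xw by simp
    moreover have "A < s * A" using s1 AB(1) by simp
    ultimately show ?thesis using nx by linarith
  qed
  have d2: "(norm (x - v))\<^sup>2 < R\<^sup>2"
  proof -
    have xw: "x \<bullet> v = s * B / 2" by (simp add: x_def ov)
    have "(norm (x - v))\<^sup>2 = x \<bullet> x - 2 * (x \<bullet> v) + B"
      by (simp add: power2_norm_eq_inner inner_diff_left inner_diff_right B_def inner_commute)
    also have "x \<bullet> x = (norm x)\<^sup>2" by (simp add: power2_norm_eq_inner)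
    finally have "(norm (x - v))\<^sup>2 = (norm x)\<^sup>2 - s * B + B" using xw by simp
    moreover have "B < s * B" using s1 AB(2) by simp
    ultimately show ?thesis using nx by linarith
  qed
  have "norm (x - u) < R" using d1 R0 by (simp add: power_less_imp_less_base)
  moreover have "norm (x - v) < R" using d2 R0 by (simp add: power_less_imp_less_base)
  ultimately show ?thesis using nxpos
    by (intro exI[of _ x] exI[of _ "max (norm (x - u)) (norm (x - v))"]) (auto simp: le_max_iff_disj)
qed


lemma heron_alg:
  fixes a b c :: real
  shows "((a+b+c)/2) * ((a+b+c)/2 - a) * ((a+b+c)/2 - b) * ((a+b+c)/2 - c)
     = (4*a\<^sup>2*b\<^sup>2 - (a\<^sup>2+b\<^sup>2-c\<^sup>2)\<^sup>2)/16"
  by (simp add: field_simps power2_eq_square)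

theorem theorem1:
  fixes p1 p2 p3 :: "real ^ 'n"
  defines "a \<equiv> norm (p1 - p2)" and "b \<equiv> norm (p2 - p3)" and "c \<equiv> norm (p1 - p3)"
  shows "degree_of_monotonicity [p1, p2, p3] =
           (if a\<^sup>2 + b\<^sup>2 > c\<^sup>2 then ereal (c / 2) else circumradius p1 p2 p3)"
proof -
  define u v where "u = p1 - p2" "v = p3 - p2"
  define A B C where "A = u \<bullet> u" "B = v \<bullet> v" "C = u \<bullet> v"
  define G where "G = A * B - C\<^sup>2"
  define good where "good R \<longleftrightarrow> (\<forall>x \<rho>. 0 \<le> \<rho> \<and> \<rho> \<le> R \<longrightarrow>
      \<not> (norm (x - u) \<le> \<rho> \<and> norm (x - v) \<le> \<rho> \<and> norm x > \<rho>))" for R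
  have aeq: "a = norm u" by (simp add: a_def u_v_def)
  have beq: "b = norm v" by (simp add: b_def u_v_def norm_minus_commute)
  have ceq: "c = norm (u - v)" by (simp add: c_def u_v_def)
  have a2: "a\<^sup>2 = A" by (simp add: aeq A_B_C_def power2_norm_eq_inner)
  have b2: "b\<^sup>2 = B" by (simp add: beq A_B_C_def power2_norm_eq_inner)
  have c2: "c\<^sup>2 = A + B - 2*C"
    by (simp add: ceq A_B_C_def power2_norm_eq_inner inner_diff_left inner_diff_right inner_commute)
  have a0: "a \<ge> 0" "b \<ge> 0" "c \<ge> 0" by (auto simp: a_def b_def c_def)
  have deg: "degree_of_monotonicity [p1, p2, p3] = Sup {ereal R | R. good R}"
  proof -
    have "(\<forall>q \<rho>. 0 \<le> \<rho> \<and> \<rho> \<le> R \<longrightarrow> consecutive_set (indices_in [p1,p2,p3] (cball q \<rho>))) \<longleftrightarrow> good R" for R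
    proof
      assume h: "\<forall>q \<rho>. 0 \<le> \<rho> \<and> \<rho> \<le> R \<longrightarrow> consecutive_set (indices_in [p1,p2,p3] (cball q \<rho>))"
      show "good R" unfolding good_def
      proof (intro allI impI)
        fix x \<rho> assume r: "0 \<le> \<rho> \<and> \<rho> \<le> R"
        have "consecutive_set (indices_in [p1,p2,p3] (cball (p2 + x) \<rho>))" using h r by blast
        hence "\<not> (dist (p2 + x) p1 \<le> \<rho> \<and> dist (p2 + x) p3 \<le> \<rho> \<and> \<not> dist (p2 + x) p2 \<le> \<rho>)"
          unfolding consec3 by simp
        moreover have "dist (p2 + x) p1 = norm (x - u)" "dist (p2 + x) p3 = norm (x - v)" "dist (p2 + x) p2 = norm x"
          by (simp_all add: dist_norm u_v_def algebra_simps)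
        ultimately show "\<not> (norm (x - u) \<le> \<rho> \<and> norm (x - v) \<le> \<rho> \<and> norm x > \<rho>)" by auto
      qed
    next
      assume h: "good R"
      show "\<forall>q \<rho>. 0 \<le> \<rho> \<and> \<rho> \<le> R \<longrightarrow> consecutive_set (indices_in [p1,p2,p3] (cball q \<rho>))"
      proof (intro allI impI)
        fix q \<rho> assume r: "0 \<le> \<rho> \<and> \<rho> \<le> R"
        have "\<not> (norm ((q - p2) - u) \<le> \<rho> \<and> norm ((q - p2) - v) \<le> \<rho> \<and> norm (q - p2) > \<rho>)"
          using h r unfolding good_def by blast
        moreover have "dist q p1 = norm ((q - p2) - u)" "dist q p3 = norm ((q - p2) - v)" "dist q p2 = norm (q - p2)"
          by (simp_all add: dist_norm u_v_def algebra_simps)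
        ultimately show "consecutive_set (indices_in [p1,p2,p3] (cball q \<rho>))"
          unfolding consec3 by auto
      qed
    qed
    thus ?thesis unfolding degree_of_monotonicity_def by simp
  qed
  have sq1: "2 * (x \<bullet> u) > A" if "norm (x - u) \<le> \<rho>" "norm x > \<rho>" "0 \<le> \<rho>" for x \<rho>
  proof -
    have "(norm (x - u))\<^sup>2 < (norm x)\<^sup>2" using that
      by (intro power_strict_mono) auto
    thus ?thesis by (simp add: power2_norm_eq_inner inner_diff_left inner_diff_right A_B_C_def inner_commute)
  qed
  have sq2: "2 * (x \<bullet> v) > B" if "norm (x - v) \<le> \<rho>" "norm x > \<rho>" "0 \<le> \<rho>" for x \<rho>
  proof -
    have "(norm (x - v))\<^sup>2 < (norm x)\<^sup>2" using that
      by (intro power_strict_mono) auto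
    thus ?thesis by (simp add: power2_norm_eq_inner inner_diff_left inner_diff_right A_B_C_def inner_commute)
  qed
  have Hdef: "circumradius p1 p2 p3 = (let \<sigma> = (a + b + c) / 2; H = \<sigma> * (\<sigma> - a) * (\<sigma> - b) * (\<sigma> - c)
      in if H = 0 then \<infinity> else ereal (a * b * c / (4 * sqrt H)))"
    unfolding circumradius_def a_def b_def c_def Let_def by simp
  define H where "H = ((a+b+c)/2) * ((a+b+c)/2 - a) * ((a+b+c)/2 - b) * ((a+b+c)/2 - c)"
  have HG: "H = G/4" unfolding H_def heron_alg a2 b2 c2 G_def by (simp add: power2_eq_square field_simps)
  have circ: "circumradius p1 p2 p3 = (if H = 0 then \<infinity> else ereal (a * b * c / (4 * sqrt H)))"
    unfolding Hdef H_def Let_def by simp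
  show ?thesis
  proof (cases "C > 0")
    case True
    hence cond: "a\<^sup>2 + b\<^sup>2 > c\<^sup>2" using a2 b2 c2 by simp
    have "Sup {ereal R | R. good R} = ereal (c/2)"
    proof (rule sup_fin)
      fix R assume g: "good R"
      show "R \<le> c/2"
      proof (rule ccontr)
        assume "\<not> R \<le> c/2"
        define x where "x = (1/2) *\<^sub>R (u + v)"
        have "norm (x - u) = c/2"
        proof -
          have "x - u = (1/2) *\<^sub>R (v - u)" unfolding x_def
            by (simp add: scaleR_right_diff_distrib scaleR_add_right) (metis scaleR_half_double diff_add_eq add_diff_cancel_left' diff_diff_eq2)?
          thus ?thesis by (simp add: ceq norm_minus_commute)
        qed
        moreover have "norm (x - v) = c/2"
        proof -
          have "x - v = (1/2) *\<^sub>R (u - v)" unfolding x_def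
            by (simp add: scaleR_right_diff_distrib scaleR_add_right) (metis scaleR_half_double diff_add_eq add_diff_cancel_left' diff_diff_eq2)?
          thus ?thesis by (simp add: ceq)
        qed
        moreover have "norm x > c/2"
        proof -
          have "(norm x)\<^sup>2 = (A + B + 2*C)/4"
            by (simp add: x_def power2_norm_eq_inner inner_add_left inner_add_right A_B_C_def inner_commute field_simps)
          moreover have "(c/2)\<^sup>2 = (A + B - 2*C)/4" using c2 by (simp add: power_divide)
          ultimately have "(c/2)\<^sup>2 < (norm x)\<^sup>2" using True by simp
          thus ?thesis using power_less_imp_less_base[of "c/2" 2 "norm x"] by simp
        qed
        moreover have "0 \<le> c/2" "c/2 \<le> R" using a0 \<open>\<not> R \<le> c/2\<close> by auto
        ultimately show False using g unfolding good_def by (metis order_refl)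
      qed
    next
      fix R assume R: "R < c/2"
      show "good R" unfolding good_def
      proof (intro allI impI notI)
        fix x \<rho> assume r: "0 \<le> \<rho> \<and> \<rho> \<le> R" and bad: "norm (x - u) \<le> \<rho> \<and> norm (x - v) \<le> \<rho> \<and> norm x > \<rho>"
        have "c \<le> norm (x - u) + norm (x - v)" unfolding ceq
          by (metis norm_minus_commute norm_triangle_sub add.commute diff_diff_eq2 norm_diff_triangle_le order_refl)
        thus False using r bad R by linarith
      qed
    qed
    thus ?thesis using deg cond by simp
  next
    case False
    hence cond: "\<not> a\<^sup>2 + b\<^sup>2 > c\<^sup>2" using a2 b2 c2 by simp
    have CS: "\<bar>C\<bar> \<le> a * b" unfolding A_B_C_def aeq beq by (rule Cauchy_Schwarz_ineq2)
    have G0: "G \<ge> 0"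
    proof -
      have "C\<^sup>2 \<le> (a*b)\<^sup>2" using CS by (metis abs_ge_zero power2_abs power_mono)
      thus ?thesis unfolding G_def using a2 b2 by (simp add: power_mult_distrib)
    qed
    show ?thesis
    proof (cases "G = 0")
      case True
      hence "H = 0" using HG by simp
      hence rhs: "circumradius p1 p2 p3 = \<infinity>" using circ by simp
      have Cab: "C = - (a*b)"
      proof -
        have "C\<^sup>2 = (a*b)\<^sup>2" using True a2 b2 unfolding G_def by (simp add: power_mult_distrib)
        hence "\<bar>C\<bar> = a*b" using a0 by (metis abs_of_nonneg mult_nonneg_nonneg power2_eq_iff_nonneg abs_ge_zero power2_abs)
        thus ?thesis using False by linarith
      qed
      have "Sup {ereal R | R. good R} = \<infinity>"
      proof (rule sup_inf)
        fix R show "good R" unfolding good_def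
        proof (intro allI impI notI)
          fix x \<rho> assume r: "0 \<le> \<rho> \<and> \<rho> \<le> R" and bad: "norm (x - u) \<le> \<rho> \<and> norm (x - v) \<le> \<rho> \<and> norm x > \<rho>"
          have P: "2 * (x \<bullet> u) > A" using sq1 bad r by blast
          have Q: "2 * (x \<bullet> v) > B" using sq2 bad r by blast
          show False
          proof (cases "a = 0 \<or> b = 0")
            case True
            then show ?thesis
            proof
              assume "a = 0" hence "u = 0" using aeq by simp
              thus False using P by (simp add: A_B_C_def)
            next
              assume "b = 0" hence "v = 0" using beq by simp
              thus False using Q by (simp add: A_B_C_def)
            qed
          next
            case nz: False
            hence pos: "a > 0" "b > 0" using a0 by auto
            have "(b *\<^sub>R u + a *\<^sub>R v) \<bullet> (b *\<^sub>R u + a *\<^sub>R v) = b*b*A + 2*a*b*C + a*a*B"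
              by (simp add: inner_add_left inner_add_right A_B_C_def inner_commute algebra_simps)
            also have "\<dots> = 0" using Cab a2 b2 by (simp add: power2_eq_square algebra_simps)
            finally have z: "b *\<^sub>R u + a *\<^sub>R v = 0" by simp
            have "x \<bullet> (b *\<^sub>R u + a *\<^sub>R v) = b * (x \<bullet> u) + a * (x \<bullet> v)" by (simp add: inner_add_right)
            hence e: "b * (x \<bullet> u) + a * (x \<bullet> v) = 0" using z by simp
            have "b * A < b * (2 * (x \<bullet> u))" using P pos by simp
            moreover have "a * B < a * (2 * (x \<bullet> v))" using Q pos by simp
            moreover have "0 \<le> b * A" "0 \<le> a * B" using pos by (simp_all add: A_B_C_def)
            ultimately show False using e by linarith
          qed
        qed
      qed
      thus ?thesis using deg cond rhs by simp
    next
      case Gne: False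
      hence Gpos: "G > 0" using G0 by simp
      hence Hpos: "H > 0" using HG by simp
      define Rc where "Rc = a * b * c / (4 * sqrt H)"
      hence rhs: "circumradius p1 p2 p3 = ereal Rc" using circ Hpos by simp
      define K where "K = A * B * (A + B - 2*C) / (4*G)"
      have Rc0: "Rc \<ge> 0" using a0 Hpos by (simp add: Rc_def)
      have RcK: "Rc\<^sup>2 = K"
      proof -
        have "Rc\<^sup>2 = a\<^sup>2 * b\<^sup>2 * c\<^sup>2 / (16 * H)" using Hpos
          by (simp add: Rc_def power_divide power_mult_distrib)
        also have "\<dots> = K" unfolding K_def a2 b2 c2 HG by simp
        finally show ?thesis .
      qed
      hence Rcs: "Rc = sqrt K" using Rc0 by (metis real_sqrt_unique)
      have "Sup {ereal R | R. good R} = ereal Rc"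
      proof (rule sup_fin)
        fix R assume g: "good R"
        show "R \<le> Rc"
        proof (rule ccontr)
          assume nr: "\<not> R \<le> Rc"
          hence R0: "R > 0" using Rc0 by simp
          have KR: "K < R\<^sup>2" using power_strict_mono[of Rc R 2] nr Rc0 RcK by simp
          have C0: "C \<le> 0" using False by simp
          have "\<exists>x \<rho>. 0 \<le> \<rho> \<and> \<rho> \<le> R \<and> norm (x - u) \<le> \<rho> \<and> norm (x - v) \<le> \<rho> \<and> norm x > \<rho>"
            by (rule exbad[of u v R]) (use C0 Gpos KR R0 in \<open>simp_all only: K_def G_def A_B_C_def\<close>)
          then obtain x \<rho> where "0 \<le> \<rho> \<and> \<rho> \<le> R \<and> norm (x - u) \<le> \<rho> \<and> norm (x - v) \<le> \<rho> \<and> norm x > \<rho>"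
            by blast
          thus False using g unfolding good_def by blast
        qed
      next
        fix R assume R: "R < Rc"
        show "good R" unfolding good_def
        proof (intro allI impI notI)
          fix x \<rho> assume r: "0 \<le> \<rho> \<and> \<rho> \<le> R" and bad: "norm (x - u) \<le> \<rho> \<and> norm (x - v) \<le> \<rho> \<and> norm x > \<rho>"
          have C0: "C \<le> 0" using False by simp
          have "K \<le> \<rho>\<^sup>2" unfolding K_def G_def A_B_C_def
            by (rule lowbound[of u v x \<rho>]) (use C0 Gpos bad r in \<open>simp_all only: K_def G_def A_B_C_def\<close>)
          hence "sqrt K \<le> sqrt (\<rho>\<^sup>2)" by (rule real_sqrt_le_mono)
          hence "sqrt K \<le> \<rho>" using r by simp
          thus False using R r Rcs by linarith
        qed
      qed
      thus ?thesis using deg cond rhs by simp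
    qed
  qed
qed

end
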